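(* Let $n\ge1$. The map $\varphi:\Pi_n\to\Pi_n$ described below is well defined (at every step $i\in\mathcal C(\pi)\cup\mathcal T(\pi)$ the current vacant set $V'$ has at least $\gamma_i(\pi)$ elements, and the resulting set of edges is the edge set of a partition of $[n]$), it is an involution, and it preserves the type: $\lambda(\varphi(\pi))=\lambda(\pi)$ for all $\pi\in\Pi_n$. Construction of $\varphi(\pi)$: start with $V'=\emptyset$ and an empty edge set $E'$. For $i=1,2,\dots,n$: if $i$ is an opener of $\pi$, add $i$ to $V'$; if $i$ is a singleton of $\pi$, do nothing; if $i$ is a closer or transient of $\pi$, let $x$ be the $\gamma_i(\pi)$-th largest element of $V'$, add the edge $(x,i)$ to $E'$ and remove $x$ from $V'$, and moreover if $i$ is a transient of $\pi$, add $i$ to $V'$. Then $\varphi(\pi)$ is the partition of $[n]$ whose edges are exactly $E'$ (blocks are the connected components of the graph $([n],E')$).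
   Context: A partition of $[n]=\{1,\dots,n\}$ is a set of pairwise disjoint nonempty subsets (blocks) of $[n]$ whose union is $[n]$; $\Pi_n$ is the set of partitions of $[n]$. The edges of $\pi$ are the pairs $(i,j)$, $i<j$, with $i,j$ consecutive elements of the same block. For a block $B$ with $|B|\ge2$, its minimum is an opener, its maximum is a closer, its other elements are transients; the element of a one-element block is a singleton. $\mathcal O(\pi),\mathcal C(\pi),\mathcal S(\pi),\mathcal T(\pi)$ are the sets of openers, closers, singletons, transients, and $\lambda(\pi)=(\mathcal O(\pi),\mathcal C(\pi),\mathcal S(\pi),\mathcal T(\pi))$ is the type of $\pi$. For $i\in[n]$, the vacant vertices of $\pi$ before $i$ are the elements $x\le i-1$ which are the left endpoint of an edge $(x,y)$ of $\pi$ with $y\ge i$. If $i\in\mathcal C(\pi)\cup\mathcal T(\pi)$, there is a unique edge $(j,i)$ of $\pi$ with $j<i$, and $\gamma_i(\pi)$ denotes the rank of $j$ among the vacant vertices of $\pi$ before $i$, listed in increasing order (so $\gamma_i(\pi)=1$ if $j$ is the smallest one). *)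

theory Defs
  imports Main "HOL-Library.Disjoint_Sets"
begin

type_synonym setpart = "nat set set"

definition Partitions :: "nat \<Rightarrow> setpart set" where
  "Partitions n = {P. partition_on {1..n} P}"

definition edges :: "setpart \<Rightarrow> (nat \<times> nat) set" where
  "edges P = {(i, j). i < j \<and> (\<exists>B\<in>P. i \<in> B \<and> j \<in> B \<and> \<not> (\<exists>k\<in>B. i < k \<and> k < j))}"

definition openers :: "setpart \<Rightarrow> nat set" where
  "openers P = {Min B | B. B \<in> P \<and> card B \<ge> 2}"

definition closers :: "setpart \<Rightarrow> nat set" where
  "closers P = {Max B | B. B \<in> P \<and> card B \<ge> 2}"

definition singletons :: "setpart \<Rightarrow> nat set" where
  "singletons P = {x. {x} \<in> P}"

definition transients :: "setpart \<Rightarrow> nat set" where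
  "transients P = {x. \<exists>B\<in>P. x \<in> B \<and> card B \<ge> 2 \<and> x \<noteq> Min B \<and> x \<noteq> Max B}"

definition ptype :: "setpart \<Rightarrow> nat set \<times> nat set \<times> nat set \<times> nat set" where
  "ptype P = (openers P, closers P, singletons P, transients P)"

definition vacant :: "setpart \<Rightarrow> nat \<Rightarrow> nat set" where
  "vacant P i = {x. x < i \<and> (\<exists>y. (x, y) \<in> edges P \<and> y \<ge> i)}"

text \<open>The unique j with (j,i) an edge (for closers/transients).\<close>
definition pred_vertex :: "setpart \<Rightarrow> nat \<Rightarrow> nat" where
  "pred_vertex P i = (THE j. (j, i) \<in> edges P)"

definition gamma :: "setpart \<Rightarrow> nat \<Rightarrow> nat" where
  "gamma P i = card {x \<in> vacant P i. x \<le> pred_vertex P i}"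

definition kth_largest :: "nat set \<Rightarrow> nat \<Rightarrow> nat" where
  "kth_largest V k = rev (sorted_list_of_set V) ! (k - 1)"

definition phi_step :: "setpart \<Rightarrow> nat set \<times> (nat \<times> nat) set \<Rightarrow> nat \<Rightarrow> nat set \<times> (nat \<times> nat) set" where
  "phi_step P st i =
     (let V = fst st; E = snd st in
      if i \<in> openers P then (insert i V, E)
      else if i \<in> closers P \<union> transients P then
        (let x = kth_largest V (gamma P i) in
          ((V - {x}) \<union> (if i \<in> transients P then {i} else {}), insert (x, i) E))
      else (V, E))"

definition phi_state :: "setpart \<Rightarrow> nat \<Rightarrow> nat set \<times> (nat \<times> nat) set" where
  "phi_state P m = foldl (phi_step P) ({}, {}) [1..<Suc m]"

definition components_partition :: "nat \<Rightarrow> (nat \<times> nat) set \<Rightarrow> setpart" where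
  "components_partition n E = {(E \<union> E\<inverse>)\<^sup>* `` {x} \<inter> {1..n} | x. x \<in> {1..n}}"

definition phi :: "nat \<Rightarrow> setpart \<Rightarrow> setpart" where
  "phi n P = components_partition n (snd (phi_state P n))"

end

theory Submission
  imports Defs
begin


lemma card_le_nth:
  fixes s :: "nat list"
  assumes "sorted_wrt (<) s" "j < length s"
  shows "card {v \<in> set s. v \<le> s ! j} = Suc j"
proof -
  have d: "distinct s" using assms(1) by (metis strict_sorted_iff)
  have "{v \<in> set s. v \<le> s ! j} = (!) s ` {..j}"
  proof (rule set_eqI, rule iffI)
    fix v assume "v \<in> {v \<in> set s. v \<le> s ! j}"
    then obtain k where k: "k < length s" "s ! k = v" "v \<le> s ! j" by (auto simp: in_set_conv_nth)
    have "k \<le> j"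
    proof (rule ccontr)
      assume "\<not> k \<le> j" then have "s ! j < s ! k" using assms k by (metis not_le sorted_wrt_iff_nth_less)
      with k show False by simp
    qed
    with k show "v \<in> (!) s ` {..j}" by auto
  next
    fix v assume "v \<in> (!) s ` {..j}"
    then obtain k where k: "k \<le> j" "v = s ! k" by auto
    have "s ! k \<le> s ! j" using assms k
      by (metis le_eq_less_or_eq sorted_wrt_iff_nth_less)
    with k assms show "v \<in> {v \<in> set s. v \<le> s ! j}" by auto
  qed
  moreover have "inj_on ((!) s) {..j}" using d assms(2)
    by (simp add: inj_on_def nth_eq_iff_index_eq)
  ultimately show ?thesis by (simp add: card_image)
qed

lemma kth_facts:
  assumes "finite V" "1 \<le> k" "k \<le> card V"
  shows "kth_largest V k \<in> V \<and> card {v\<in>V. v \<le> kth_largest V k} = card V + 1 - k"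
proof -
  define s where "s = sorted_list_of_set V"
  have ls: "length s = card V" using assms by (simp add: s_def)
  have ss: "sorted_wrt (<) s" "set s = V" using assms by (simp_all add: s_def)
  have e: "kth_largest V k = s ! (card V - k)"
    using assms ls unfolding kth_largest_def s_def[symmetric]
    by (simp add: rev_nth Suc_diff_Suc)
  have j: "card V - k < length s" using assms ls by simp
  show ?thesis using card_le_nth[OF ss(1) j] e j ss assms by auto
qed

lemma kth_inv:
  assumes "finite V" "x \<in> V"
  shows "kth_largest V (card V + 1 - card {v\<in>V. v \<le> x}) = x"
proof -
  define s where "s = sorted_list_of_set V"
  have ls: "length s = card V" using assms by (simp add: s_def)
  have ss: "sorted_wrt (<) s" "set s = V" using assms by (simp_all add: s_def)
  obtain j where j: "j < length s" "s ! j = x" using ss assms by (auto simp: in_set_conv_nth)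
  have c: "card {v\<in>V. v \<le> x} = Suc j" using card_le_nth[OF ss(1) j(1)] j ss by simp
  show ?thesis unfolding kth_largest_def s_def[symmetric] c using j ls
    by (simp add: rev_nth)
qed



definition valid :: "nat \<Rightarrow> (nat \<times> nat) set \<Rightarrow> bool" where
  "valid n F \<longleftrightarrow> (\<forall>x y. (x,y)\<in>F \<longrightarrow> 1 \<le> x \<and> x < y \<and> y \<le> n)
     \<and> (\<forall>x y z. (x,y)\<in>F \<longrightarrow> (x,z)\<in>F \<longrightarrow> y = z)
     \<and> (\<forall>x y z. (x,z)\<in>F \<longrightarrow> (y,z)\<in>F \<longrightarrow> x = y)"

definition outE :: "(nat \<times> nat) set \<Rightarrow> nat \<Rightarrow> bool" where
  "outE F x \<longleftrightarrow> (\<exists>y. (x,y)\<in>F)"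

definition inE :: "(nat \<times> nat) set \<Rightarrow> nat \<Rightarrow> bool" where
  "inE F x \<longleftrightarrow> (\<exists>y. (y,x)\<in>F)"

section \<open>Partitions\<close>

lemma part_block_sub: "P \<in> Partitions n \<Longrightarrow> B \<in> P \<Longrightarrow> B \<subseteq> {1..n}"
  unfolding Partitions_def partition_on_def by auto

lemma part_block_fin: "P \<in> Partitions n \<Longrightarrow> B \<in> P \<Longrightarrow> finite B"
  by (meson finite_atLeastAtMost finite_subset part_block_sub)

lemma part_block_ne: "P \<in> Partitions n \<Longrightarrow> B \<in> P \<Longrightarrow> B \<noteq> {}"
  unfolding Partitions_def partition_on_def by auto

lemma part_cover: "P \<in> Partitions n \<Longrightarrow> x \<in> {1..n} \<Longrightarrow> \<exists>B\<in>P. x \<in> B"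
  unfolding Partitions_def partition_on_def by auto

lemma part_uniq: "P \<in> Partitions n \<Longrightarrow> B \<in> P \<Longrightarrow> B' \<in> P \<Longrightarrow> x \<in> B \<Longrightarrow> x \<in> B' \<Longrightarrow> B = B'"
  unfolding Partitions_def partition_on_def disjoint_def disjnt_def pairwise_def by blast

lemma edges_block:
  assumes "P \<in> Partitions n" "(x,y) \<in> edges P" "x \<in> B" "B \<in> P"
  shows "y \<in> B" "x < y"
proof -
  obtain B' where "B' \<in> P" "x \<in> B'" "y \<in> B'" "x < y" using assms(2) unfolding edges_def by auto
  then show "y \<in> B" "x < y" using part_uniq[OF assms(1)] assms(3,4) by blast+
qed

lemma edges_block2:
  assumes "P \<in> Partitions n" "(x,y) \<in> edges P" "y \<in> B" "B \<in> P"
  shows "x \<in> B"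
proof -
  obtain B' where "B' \<in> P" "x \<in> B'" "y \<in> B'" using assms(2) unfolding edges_def by auto
  then show "x \<in> B" using part_uniq[OF assms(1)] assms(3,4) by blast
qed

lemma edge_nobetween:
  assumes "P \<in> Partitions n" "(x,z) \<in> edges P" "x \<in> B" "B \<in> P" "k \<in> B" "x < k"
  shows "z \<le> k"
proof -
  obtain B' where B': "B' \<in> P" "x \<in> B'" "z \<in> B'" "\<not> (\<exists>k\<in>B'. x < k \<and> k < z)"
    using assms(2) unfolding edges_def by auto
  have "B' = B" using part_uniq[OF assms(1) B'(1) assms(4) B'(2) assms(3)] .
  then show ?thesis using B'(4) assms(5,6) by auto
qed

lemma edges_ex_block:
  assumes "(x,y) \<in> edges P"
  shows "\<exists>B\<in>P. x \<in> B \<and> y \<in> B"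
  using assms unfolding edges_def by auto

lemma edge_min:
  assumes "P \<in> Partitions n" "B \<in> P" "x \<in> B" "\<exists>y\<in>B. x < y"
  shows "(x, Min {k\<in>B. x < k}) \<in> edges P \<and> Min {k\<in>B. x < k} \<in> B \<and> x < Min {k\<in>B. x < k}"
proof -
  let ?S = "{k\<in>B. x < k}"
  have f: "finite ?S" "?S \<noteq> {}" using part_block_fin[OF assms(1,2)] assms(4) by auto
  have m: "Min ?S \<in> B" "x < Min ?S" using Min_in[OF f] by auto
  have nb: "\<not> (\<exists>k\<in>B. x < k \<and> k < Min ?S)"
  proof
    assume "\<exists>k\<in>B. x < k \<and> k < Min ?S"
    then obtain k where k: "k \<in> B" "x < k" "k < Min ?S" by blast
    then have "Min ?S \<le> k" using Min_le[OF f(1)] by simp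
    with k show False by simp
  qed
  have "(x, Min ?S) \<in> edges P" unfolding edges_def mem_Collect_eq prod.case
    using m nb assms(2,3) by blast
  then show ?thesis using m by blast
qed

lemma edge_max:
  assumes "P \<in> Partitions n" "B \<in> P" "x \<in> B" "\<exists>y\<in>B. y < x"
  shows "(Max {k\<in>B. k < x}, x) \<in> edges P"
proof -
  let ?S = "{k\<in>B. k < x}"
  have f: "finite ?S" "?S \<noteq> {}" using part_block_fin[OF assms(1,2)] assms(4) by auto
  have m: "Max ?S \<in> B" "Max ?S < x" using Max_in[OF f] by auto
  have nb: "\<not> (\<exists>k\<in>B. Max ?S < k \<and> k < x)"
  proof
    assume "\<exists>k\<in>B. Max ?S < k \<and> k < x"
    then obtain k where k: "k \<in> B" "Max ?S < k" "k < x" by blast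
    then have "k \<le> Max ?S" using Max_ge[OF f(1)] by simp
    with k show False by simp
  qed
  show "(Max ?S, x) \<in> edges P" unfolding edges_def mem_Collect_eq prod.case
    using m nb assms(2,3) by blast
qed

lemma out_iff:
  assumes "P \<in> Partitions n" "B \<in> P" "x \<in> B"
  shows "outE (edges P) x \<longleftrightarrow> (\<exists>y\<in>B. x < y)"
  using edge_min[OF assms] edges_block[OF assms(1) _ assms(3,2)] unfolding outE_def by blast

lemma in_iff:
  assumes "P \<in> Partitions n" "B \<in> P" "x \<in> B"
  shows "inE (edges P) x \<longleftrightarrow> (\<exists>y\<in>B. y < x)"
  using edge_max[OF assms] edges_block2[OF assms(1) _ assms(3,2)] edges_block[OF assms(1)] assms(2)
  unfolding inE_def by blast

lemma edges_valid:
  assumes "P \<in> Partitions n"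
  shows "valid n (edges P)"
proof -
  have a: "1 \<le> x \<and> x < y \<and> y \<le> n" if e: "(x,y) \<in> edges P" for x y
  proof -
    obtain B where "B \<in> P" "x \<in> B" "y \<in> B" using edges_ex_block[OF e] by blast
    then show ?thesis using part_block_sub[OF assms] e unfolding edges_def by fastforce
  qed
  have b: "y = z" if e: "(x,y) \<in> edges P" "(x,z) \<in> edges P" for x y z
  proof -
    obtain B where B: "B \<in> P" "x \<in> B" "y \<in> B" using edges_ex_block[OF e(1)] by blast
    have z: "z \<in> B" "x < z" using edges_block[OF assms e(2) B(2,1)] by auto
    have y: "x < y" using edges_block[OF assms e(1) B(2,1)] by auto
    show ?thesis
    proof (rule ccontr)
      assume "y \<noteq> z"
      then have "y < z \<or> z < y" by auto
      then show False using edge_nobetween[OF assms e(1) B(2,1)] edge_nobetween[OF assms e(2) B(2,1)] y z B by fastforce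
    qed
  qed
  have c: "x = y" if e: "(x,z) \<in> edges P" "(y,z) \<in> edges P" for x y z
  proof -
    obtain B where B: "B \<in> P" "x \<in> B" "z \<in> B" using edges_ex_block[OF e(1)] by blast
    have y: "y \<in> B" "y < z" using edges_block2[OF assms e(2) B(3,1)] e(2) unfolding edges_def by auto
    have x: "x < z" using e(1) unfolding edges_def by auto
    show ?thesis
    proof (rule ccontr)
      assume "x \<noteq> y"
      then have "y < x \<or> x < y" by auto
      then show False using edge_nobetween[OF assms e(1) B(2,1)] edge_nobetween[OF assms e(2) y(1) B(1)] y x B by fastforce
    qed
  qed
  show ?thesis unfolding valid_def using a b c by blast
qed

section \<open>Types\<close>

lemma edge_in_range:
  assumes "P \<in> Partitions n" "outE (edges P) x \<or> inE (edges P) x"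
  shows "\<exists>B\<in>P. x \<in> B"
  using assms(2) edges_ex_block unfolding outE_def inE_def by blast

lemma card2_iff:
  assumes "finite B" "x \<in> B"
  shows "card B \<ge> 2 \<longleftrightarrow> (\<exists>y\<in>B. y \<noteq> x)"
proof
  assume "2 \<le> card B"
  show "\<exists>y\<in>B. y \<noteq> x"
  proof (rule ccontr)
    assume "\<not> (\<exists>y\<in>B. y \<noteq> x)"
    then have "B \<subseteq> {x}" by auto
    then have "card B \<le> card {x}" by (intro card_mono) auto
    with \<open>2 \<le> card B\<close> show False by simp
  qed
next
  assume "\<exists>y\<in>B. y \<noteq> x"
  then obtain y where "y \<in> B" "y \<noteq> x" by blast
  then have "card {x,y} \<le> card B" using assms by (intro card_mono) auto
  then show "card B \<ge> 2" using \<open>y \<noteq> x\<close> by simp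
qed

lemma openers_char:
  assumes "P \<in> Partitions n"
  shows "openers P = {x. outE (edges P) x \<and> \<not> inE (edges P) x}"
proof (rule set_eqI, rule iffI)
  fix x assume "x \<in> openers P"
  then obtain B where B: "B \<in> P" "card B \<ge> 2" "x = Min B" unfolding openers_def by auto
  have f: "finite B" "B \<noteq> {}" using part_block_fin[OF assms B(1)] part_block_ne[OF assms B(1)] by auto
  have xB: "x \<in> B" using B f by simp
  obtain y where y: "y \<in> B" "y \<noteq> x" using card2_iff[OF f(1) xB] B by auto
  have "x < y" using y B f by (metis Min_le le_neq_implies_less)
  moreover have "\<not> (\<exists>y\<in>B. y < x)" using B f by (metis Min_le not_le)
  ultimately show "x \<in> {x. outE (edges P) x \<and> \<not> inE (edges P) x}"
    using out_iff[OF assms B(1) xB] in_iff[OF assms B(1) xB] y by auto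
next
  fix x assume x: "x \<in> {x. outE (edges P) x \<and> \<not> inE (edges P) x}"
  then obtain B where B: "B \<in> P" "x \<in> B" using edge_in_range[OF assms] by blast
  have f: "finite B" using part_block_fin[OF assms B(1)] .
  obtain y where y: "y \<in> B" "x < y" using x out_iff[OF assms B] by auto
  have nl: "\<forall>y\<in>B. \<not> y < x" using x in_iff[OF assms B] by auto
  have "x = Min B" using nl B f by (metis Min_in Min_le empty_iff le_antisym not_le)
  moreover have "card B \<ge> 2" using card2_iff[OF f B(2)] y by auto
  ultimately show "x \<in> openers P" unfolding openers_def using B by auto
qed

lemma closers_char:
  assumes "P \<in> Partitions n"
  shows "closers P = {x. inE (edges P) x \<and> \<not> outE (edges P) x}"
proof (rule set_eqI, rule iffI)
  fix x assume "x \<in> closers P"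
  then obtain B where B: "B \<in> P" "card B \<ge> 2" "x = Max B" unfolding closers_def by auto
  have f: "finite B" "B \<noteq> {}" using part_block_fin[OF assms B(1)] part_block_ne[OF assms B(1)] by auto
  have xB: "x \<in> B" using B f by simp
  obtain y where y: "y \<in> B" "y \<noteq> x" using card2_iff[OF f(1) xB] B by auto
  have "y < x" using y B f by (metis Max_ge le_neq_implies_less)
  moreover have "\<not> (\<exists>y\<in>B. x < y)" using B f by (metis Max_ge not_le)
  ultimately show "x \<in> {x. inE (edges P) x \<and> \<not> outE (edges P) x}"
    using out_iff[OF assms B(1) xB] in_iff[OF assms B(1) xB] y by auto
next
  fix x assume x: "x \<in> {x. inE (edges P) x \<and> \<not> outE (edges P) x}"
  then obtain B where B: "B \<in> P" "x \<in> B" using edge_in_range[OF assms] by blast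
  have f: "finite B" using part_block_fin[OF assms B(1)] .
  obtain y where y: "y \<in> B" "y < x" using x in_iff[OF assms B] by auto
  have nl: "\<forall>y\<in>B. \<not> x < y" using x out_iff[OF assms B] by auto
  have "x = Max B" using nl B f by (metis Max_in Max_ge empty_iff le_antisym not_le)
  moreover have "card B \<ge> 2" using card2_iff[OF f B(2)] y by auto
  ultimately show "x \<in> closers P" unfolding closers_def using B by auto
qed

lemma transients_char:
  assumes "P \<in> Partitions n"
  shows "transients P = {x. inE (edges P) x \<and> outE (edges P) x}"
proof (rule set_eqI, rule iffI)
  fix x assume "x \<in> transients P"
  then obtain B where B: "B \<in> P" "x \<in> B" "card B \<ge> 2" "x \<noteq> Min B" "x \<noteq> Max B"
    unfolding transients_def by auto
  have f: "finite B" using part_block_fin[OF assms B(1)] .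
  have "Min B < x" using B f by (metis Min_le le_neq_implies_less)
  moreover have "x < Max B" using B f by (metis Max_ge le_neq_implies_less)
  moreover have "Min B \<in> B" "Max B \<in> B" using B f by (metis Min_in empty_iff, metis Max_in empty_iff)
  ultimately show "x \<in> {x. inE (edges P) x \<and> outE (edges P) x}"
    using out_iff[OF assms B(1,2)] in_iff[OF assms B(1,2)] by auto
next
  fix x assume x: "x \<in> {x. inE (edges P) x \<and> outE (edges P) x}"
  then obtain B where B: "B \<in> P" "x \<in> B" using edge_in_range[OF assms] by blast
  have f: "finite B" using part_block_fin[OF assms B(1)] .
  obtain y where y: "y \<in> B" "y < x" using x in_iff[OF assms B] by auto
  obtain z where z: "z \<in> B" "x < z" using x out_iff[OF assms B] by auto
  have "x \<noteq> Min B" using y f by (metis Min_le not_le)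
  moreover have "x \<noteq> Max B" using z f by (metis Max_ge not_le)
  moreover have "card B \<ge> 2" using card2_iff[OF f B(2)] y by auto
  ultimately show "x \<in> transients P" unfolding transients_def using B by auto
qed

lemma singletons_char:
  assumes "P \<in> Partitions n"
  shows "singletons P = {x. x \<in> {1..n} \<and> \<not> inE (edges P) x \<and> \<not> outE (edges P) x}"
proof (rule set_eqI, rule iffI)
  fix x assume "x \<in> singletons P"
  then have B: "{x} \<in> P" unfolding singletons_def by auto
  have xB: "x \<in> {x}" by simp
  have "\<not> outE (edges P) x" using out_iff[OF assms B xB] by simp
  moreover have "\<not> inE (edges P) x" using in_iff[OF assms B xB] by simp
  moreover have "x \<in> {1..n}" using part_block_sub[OF assms B] by simp
  ultimately show "x \<in> {x. x \<in> {1..n} \<and> \<not> inE (edges P) x \<and> \<not> outE (edges P) x}" by simp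
next
  fix x assume x: "x \<in> {x. x \<in> {1..n} \<and> \<not> inE (edges P) x \<and> \<not> outE (edges P) x}"
  then obtain B where B: "B \<in> P" "x \<in> B" using part_cover[OF assms] by blast
  have x': "\<not> inE (edges P) x" "\<not> outE (edges P) x" using x by auto
  have nx: "\<not> (\<exists>y\<in>B. x < y)" "\<not> (\<exists>y\<in>B. y < x)" using x' out_iff[OF assms B] in_iff[OF assms B] by simp_all
  have "\<forall>y\<in>B. y = x" using nx by (metis nat_neq_iff)
  then have "B = {x}" using B(2) by blast
  then show "x \<in> singletons P" using B(1) unfolding singletons_def by simp
qed



lemma valid_trancl:
  assumes "valid n F" "(x,y) \<in> F\<^sup>+"
  shows "x < y \<and> 1 \<le> x \<and> y \<le> n"
  using assms(2)
proof (induction rule: trancl_induct)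
  case (base y) then show ?case using assms(1) unfolding valid_def by blast
next
  case (step y z) then show ?case using assms(1) unfolding valid_def by fastforce
qed

lemma valid_out: "valid n F \<Longrightarrow> (x,y)\<in>F \<Longrightarrow> (x,z)\<in>F \<Longrightarrow> y = z"
  unfolding valid_def by blast
lemma valid_in: "valid n F \<Longrightarrow> (x,z)\<in>F \<Longrightarrow> (y,z)\<in>F \<Longrightarrow> x = y"
  unfolding valid_def by blast
lemma valid_rng: "valid n F \<Longrightarrow> (x,y)\<in>F \<Longrightarrow> 1 \<le> x \<and> x < y \<and> y \<le> n"
  unfolding valid_def by blast

lemma R_sym: "(a,b) \<in> (F \<union> F\<inverse>)\<^sup>* \<Longrightarrow> (b,a) \<in> (F \<union> F\<inverse>)\<^sup>*"
  using sym_rtrancl[OF sym_Un_converse[of F]] unfolding sym_def by blast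

lemma R_class: "(a,b) \<in> (F \<union> F\<inverse>)\<^sup>* \<Longrightarrow> (F \<union> F\<inverse>)\<^sup>* `` {a} = (F \<union> F\<inverse>)\<^sup>* `` {b}"
proof -
  assume ab: "(a,b) \<in> (F \<union> F\<inverse>)\<^sup>*"
  have ba: "(b,a) \<in> (F \<union> F\<inverse>)\<^sup>*" using R_sym[OF ab] .
  show ?thesis
  proof (rule set_eqI, rule iffI)
    fix z assume "z \<in> (F \<union> F\<inverse>)\<^sup>* `` {a}"
    then have "(a,z) \<in> (F \<union> F\<inverse>)\<^sup>*" by simp
    then have "(b,z) \<in> (F \<union> F\<inverse>)\<^sup>*" using ba by (rule rtrancl_trans[rotated])
    then show "z \<in> (F \<union> F\<inverse>)\<^sup>* `` {b}" by simp
  next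
    fix z assume "z \<in> (F \<union> F\<inverse>)\<^sup>* `` {b}"
    then have "(b,z) \<in> (F \<union> F\<inverse>)\<^sup>*" by simp
    then have "(a,z) \<in> (F \<union> F\<inverse>)\<^sup>*" using ab by (rule rtrancl_trans[rotated])
    then show "z \<in> (F \<union> F\<inverse>)\<^sup>* `` {a}" by simp
  qed
qed

lemma chain:
  assumes v: "valid n F" and r: "(x,y) \<in> (F \<union> F\<inverse>)\<^sup>*"
  shows "x = y \<or> (x,y) \<in> F\<^sup>+ \<or> (y,x) \<in> F\<^sup>+"
  using r
proof (induction rule: rtrancl_induct)
  case base then show ?case by simp
next
  case (step y z)
  from step.hyps(2) consider (yz) "(y,z) \<in> F" | (zy) "(z,y) \<in> F" by blast
  then show ?case
  proof cases
    case yz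
    from step.IH consider "x = y" | "(x,y) \<in> F\<^sup>+" | "(y,x) \<in> F\<^sup>+" by blast
    then show ?thesis
    proof cases
      case 1 then show ?thesis using yz by auto
    next
      case 2 then show ?thesis using yz by (meson trancl.trancl_into_trancl)
    next
      case 3
      then show ?thesis
      proof (rule converse_tranclE)
        assume "(y,x) \<in> F" then show ?thesis using valid_out[OF v yz] by simp
      next
        fix w assume "(y,w) \<in> F" "(w,x) \<in> F\<^sup>+"
        then show ?thesis using valid_out[OF v yz] by simp
      qed
    qed
  next
    case zy
    from step.IH consider "x = y" | "(x,y) \<in> F\<^sup>+" | "(y,x) \<in> F\<^sup>+" by blast
    then show ?thesis
    proof cases
      case 1 then show ?thesis using zy by auto
    next
      case 2
      then show ?thesis
      proof (rule tranclE)
        assume "(x,y) \<in> F" then show ?thesis using valid_in[OF v zy] by simp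
      next
        fix w assume "(x,w) \<in> F\<^sup>+" "(w,y) \<in> F"
        then show ?thesis using valid_in[OF v zy] by simp
      qed
    next
      case 3 then show ?thesis using zy by (meson trancl_into_trancl2)
    qed
  qed
qed

lemma comp_part:
  assumes v: "valid n F"
  shows "components_partition n F \<in> Partitions n"
proof -
  let ?R = "(F \<union> F\<inverse>)\<^sup>*"
  let ?P = "components_partition n F"
  have u: "\<Union>?P = {1..n}"
  proof
    show "\<Union>?P \<subseteq> {1..n}" unfolding components_partition_def by auto
    show "{1..n} \<subseteq> \<Union>?P"
    proof
      fix x assume x: "x \<in> {1..n}"
      then have "x \<in> ?R `` {x} \<inter> {1..n}" by simp
      moreover have "?R `` {x} \<inter> {1..n} \<in> ?P" unfolding components_partition_def using x by blast
      ultimately show "x \<in> \<Union>?P" by blast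
    qed
  qed
  have d: "disjoint ?P"
    unfolding disjoint_def
  proof (intro ballI impI)
    fix A B assume A: "A \<in> ?P" and B: "B \<in> ?P" and ne: "A \<noteq> B"
    obtain a where a: "A = ?R `` {a} \<inter> {1..n}" using A unfolding components_partition_def by blast
    obtain b where b: "B = ?R `` {b} \<inter> {1..n}" using B unfolding components_partition_def by blast
    show "A \<inter> B = {}"
    proof (rule ccontr)
      assume "A \<inter> B \<noteq> {}"
      then obtain z where "(a,z) \<in> ?R" "(b,z) \<in> ?R" using a b by blast
      then have "(a,b) \<in> ?R" using R_sym rtrancl_trans by metis
      then have "A = B" using a b R_class by metis
      with ne show False by simp
    qed
  qed
  have e: "{} \<notin> ?P"
  proof
    assume "{} \<in> ?P"
    then obtain x where "x \<in> {1..n}" "{} = ?R `` {x} \<inter> {1..n}" unfolding components_partition_def by blast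
    then show False by (metis Image_singleton_iff IntI empty_iff rtrancl.rtrancl_refl)
  qed
  show ?thesis unfolding Partitions_def partition_on_def using u d e by simp
qed

lemma comp_edges:
  assumes v: "valid n F"
  shows "edges (components_partition n F) = F"
proof -
  let ?R = "(F \<union> F\<inverse>)\<^sup>*"
  let ?P = "components_partition n F"
  show ?thesis
  proof (rule set_eqI, rule iffI)
    fix p assume p: "p \<in> edges ?P"
    obtain i j where ij: "p = (i,j)" by (cases p)
    obtain C where C: "C \<in> ?P" "i \<in> C" "j \<in> C" "i < j" "\<not> (\<exists>k\<in>C. i < k \<and> k < j)"
      using p unfolding ij edges_def by blast
    obtain x where x: "C = ?R `` {x} \<inter> {1..n}" using C(1) unfolding components_partition_def by blast
    have xi: "(x,i) \<in> ?R" using C(2) x by blast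
    have xj: "(x,j) \<in> ?R" using C(3) x by blast
    have "(i,x) \<in> ?R" using R_sym[OF xi] .
    then have ijR: "(i,j) \<in> ?R" using xj by (rule rtrancl_trans)
    have c3: "i = j \<or> (i,j) \<in> F\<^sup>+ \<or> (j,i) \<in> F\<^sup>+" by (rule chain[OF v ijR])
    have "(j,i) \<notin> F\<^sup>+"
    proof
      assume "(j,i) \<in> F\<^sup>+" then have "j < i" using valid_trancl[OF v] by blast
      with C(4) show False by simp
    qed
    then have "(i,j) \<in> F\<^sup>+" using c3 C(4) by blast
    then show "p \<in> F"
    proof (rule converse_tranclE)
      assume "(i,j) \<in> F" then show ?thesis using ij by simp
    next
      fix w assume w: "(i,w) \<in> F" "(w,j) \<in> F\<^sup>+"
      have "(i,w) \<in> F \<union> F\<inverse>" using w(1) by blast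
      then have xw: "(x,w) \<in> ?R" using xi by (rule rtrancl.rtrancl_into_rtrancl[rotated])
      have w1: "w \<in> {1..n}" "i < w" using valid_rng[OF v w(1)] by auto
      have w2: "w < j" using valid_trancl[OF v w(2)] by simp
      have "w \<in> C" using x xw w1(1) by blast
      then show ?thesis using C(5) w1(2) w2 by blast
    qed
  next
    fix p assume p: "p \<in> F"
    obtain i j where ij: "p = (i,j)" by (cases p)
    have rng: "1 \<le> i" "i < j" "j \<le> n" using valid_rng[OF v p[unfolded ij]] by auto
    let ?C = "?R `` {i} \<inter> {1..n}"
    have i1: "i \<in> {1..n}" "j \<in> {1..n}" using rng by auto
    have C: "?C \<in> ?P" unfolding components_partition_def using i1(1) by blast
    have iC: "i \<in> ?C" using i1 by simp
    have "(i,j) \<in> F \<union> F\<inverse>" using p ij by simp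
    then have "(i,j) \<in> ?R" by (rule r_into_rtrancl)
    then have jC: "j \<in> ?C" using i1 by simp
    have nb: "\<not> (\<exists>k\<in>?C. i < k \<and> k < j)"
    proof
      assume "\<exists>k\<in>?C. i < k \<and> k < j"
      then obtain k where k: "(i,k) \<in> ?R" "i < k" "k < j" by blast
      have c3: "i = k \<or> (i,k) \<in> F\<^sup>+ \<or> (k,i) \<in> F\<^sup>+" by (rule chain[OF v k(1)])
      have "(k,i) \<notin> F\<^sup>+"
      proof
        assume "(k,i) \<in> F\<^sup>+" then have "k < i" using valid_trancl[OF v] by blast
        with k(2) show False by simp
      qed
      then have "(i,k) \<in> F\<^sup>+" using c3 k(2) by blast
      then show False
      proof (rule converse_tranclE)
        assume "(i,k) \<in> F" then show False using valid_out[OF v, of i j k] p ij k by simp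
      next
        fix w assume w: "(i,w) \<in> F" "(w,k) \<in> F\<^sup>+"
        have "w = j" using valid_out[OF v, of i j w] p ij w by simp
        then show False using valid_trancl[OF v w(2)] k by simp
      qed
    qed
    have ex: "\<exists>B\<in>?P. i \<in> B \<and> j \<in> B \<and> \<not> (\<exists>k\<in>B. i < k \<and> k < j)"
    proof (rule bexI[of _ ?C])
      show "i \<in> ?C \<and> j \<in> ?C \<and> \<not> (\<exists>k\<in>?C. i < k \<and> k < j)"
        by (rule conjI[OF iC conjI[OF jC nb]])
      show "?C \<in> ?P" by (rule C)
    qed
    have "(i,j) \<in> edges ?P" unfolding edges_def mem_Collect_eq prod.case
      by (rule conjI[OF rng(2) ex])
    then show "p \<in> edges ?P" using ij by simp
  qed
qed

lemma lt_in_block: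
  assumes P: "P \<in> Partitions n" and B: "B \<in> P"
  shows "x \<in> B \<Longrightarrow> y \<in> B \<Longrightarrow> x < y \<Longrightarrow> (x,y) \<in> (edges P)\<^sup>+"
proof (induction "y - x" arbitrary: x rule: less_induct)
  case less
  have ex: "\<exists>y\<in>B. x < y" using less by blast
  note m = edge_min[OF P B less.prems(1) ex]
  let ?z = "Min {k\<in>B. x < k}"
  have zy: "?z \<le> y" using less part_block_fin[OF P B] by (intro Min_le) auto
  show ?case
  proof (cases "?z = y")
    case True then show ?thesis using m by auto
  next
    case False
    then have "?z < y" using zy by simp
    then have "(?z, y) \<in> (edges P)\<^sup>+" using less m by (intro less.hyps) auto
    then show ?thesis using m by (meson trancl_into_trancl2)
  qed
qed

lemma R_block:
  assumes P: "P \<in> Partitions n" and B: "B \<in> P" and x: "x \<in> B"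
  shows "((edges P) \<union> (edges P)\<inverse>)\<^sup>* `` {x} \<inter> {1..n} = B"
proof
  let ?R = "((edges P) \<union> (edges P)\<inverse>)\<^sup>*"
  have "z \<in> B" if "(x,z) \<in> ?R" for z
    using that
  proof (induction rule: rtrancl_induct)
    case base then show ?case using x by simp
  next
    case (step y z)
    then show ?case using edges_block[OF P _ _ B] edges_block2[OF P _ _ B] by blast
  qed
  then show "?R `` {x} \<inter> {1..n} \<subseteq> B" by auto
  show "B \<subseteq> ?R `` {x} \<inter> {1..n}"
  proof
    fix z assume z: "z \<in> B"
    have "(x,z) \<in> ?R"
    proof -
      consider "x = z" | "x < z" | "z < x" by linarith
      then show ?thesis
      proof cases
        case 1 then show ?thesis by simp
      next
        case 2
        have "(x,z) \<in> (edges P)\<^sup>+" using lt_in_block[OF P B x z 2] .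
        then show ?thesis by (meson UnI1 rtrancl_mono subsetI trancl_into_rtrancl subsetD)
      next
        case 3
        have "(z,x) \<in> (edges P)\<^sup>+" using lt_in_block[OF P B z x 3] .
        then have "(z,x) \<in> ?R" by (meson UnI1 rtrancl_mono subsetI trancl_into_rtrancl subsetD)
        then show ?thesis by (rule R_sym)
      qed
    qed
    then show "z \<in> ?R `` {x} \<inter> {1..n}" using z part_block_sub[OF P B] by auto
  qed
qed

lemma comp_of_edges:
  assumes P: "P \<in> Partitions n"
  shows "components_partition n (edges P) = P"
proof
  show "components_partition n (edges P) \<subseteq> P"
  proof
    fix C assume "C \<in> components_partition n (edges P)"
    then obtain x where x: "x \<in> {1..n}" "C = ((edges P) \<union> (edges P)\<inverse>)\<^sup>* `` {x} \<inter> {1..n}"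
      unfolding components_partition_def by blast
    obtain B where B: "B \<in> P" "x \<in> B" using part_cover[OF P x(1)] by blast
    show "C \<in> P" using R_block[OF P B] x B by simp
  qed
  show "P \<subseteq> components_partition n (edges P)"
  proof
    fix B assume B: "B \<in> P"
    obtain x where x: "x \<in> B" using part_block_ne[OF P B] by blast
    have "x \<in> {1..n}" using part_block_sub[OF P B] x by blast
    then show "B \<in> components_partition n (edges P)"
      unfolding components_partition_def using R_block[OF P B x] by blast
  qed
qed



lemma step_eq:
  assumes P: "P \<in> Partitions n"
  shows "phi_step P (V,E) i =
    (if outE (edges P) i \<and> \<not> inE (edges P) i then (insert i V, E)
     else if inE (edges P) i then
       ((V - {kth_largest V (gamma P i)}) \<union> (if outE (edges P) i then {i} else {}),
        insert (kth_largest V (gamma P i), i) E)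
     else (V, E))"
proof -
  have o: "i \<in> openers P \<longleftrightarrow> outE (edges P) i \<and> \<not> inE (edges P) i" using openers_char[OF P] by simp
  have c: "i \<in> closers P \<union> transients P \<longleftrightarrow> inE (edges P) i"
    using closers_char[OF P] transients_char[OF P] by auto
  have t: "i \<in> transients P \<longleftrightarrow> inE (edges P) i \<and> outE (edges P) i" using transients_char[OF P] by simp
  show ?thesis unfolding phi_step_def Let_def fst_conv snd_conv o c t by simp
qed

lemma state_0: "phi_state P 0 = ({}, {})"
  unfolding phi_state_def by simp

lemma state_Suc: "phi_state P (Suc m) = phi_step P (phi_state P m) (Suc m)"
  unfolding phi_state_def by simp

lemma step_snd: "snd (phi_step P st i) = snd st \<or> (\<exists>x. snd (phi_step P st i) = insert (x,i) (snd st))"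
  unfolding phi_step_def Let_def by auto

lemma pred_unique:
  assumes P: "P \<in> Partitions n" and e: "(j,i) \<in> edges P"
  shows "pred_vertex P i = j"
  unfolding pred_vertex_def
proof (rule the_equality)
  show "(j,i) \<in> edges P" by (rule e)
  fix k assume "(k,i) \<in> edges P"
  then show "k = j" using valid_in[OF edges_valid[OF P] _ e] by blast
qed

lemma pred_edge:
  assumes P: "P \<in> Partitions n" and i: "inE (edges P) i"
  shows "(pred_vertex P i, i) \<in> edges P"
proof -
  obtain j where e: "(j,i) \<in> edges P" using i unfolding inE_def by blast
  then show ?thesis using pred_unique[OF P e] by simp
qed

lemma vac_fin: "finite (vacant P i)"
proof -
  have "vacant P i \<subseteq> {..<i}" unfolding vacant_def by auto
  then show ?thesis using finite_subset by blast
qed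

lemma pred_vac:
  assumes P: "P \<in> Partitions n" and e: "(j,i) \<in> edges P"
  shows "j \<in> vacant P i"
  using valid_rng[OF edges_valid[OF P] e] e unfolding vacant_def by blast

lemma gamma_bounds:
  assumes P: "P \<in> Partitions n" and i: "inE (edges P) i"
  shows "1 \<le> gamma P i \<and> gamma P i \<le> card (vacant P i)"
proof -
  have pv: "pred_vertex P i \<in> vacant P i" using pred_vac[OF P pred_edge[OF P i]] .
  have f: "finite {x \<in> vacant P i. x \<le> pred_vertex P i}" using vac_fin by simp
  have "pred_vertex P i \<in> {x \<in> vacant P i. x \<le> pred_vertex P i}" using pv by simp
  then have "card {x \<in> vacant P i. x \<le> pred_vertex P i} > 0" using f card_gt_0_iff by blast
  moreover have "card {x \<in> vacant P i. x \<le> pred_vertex P i} \<le> card (vacant P i)"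
    using vac_fin by (intro card_mono) auto
  ultimately show ?thesis unfolding gamma_def by simp
qed

lemma vac_Suc:
  assumes P: "P \<in> Partitions n"
  shows "vacant P (Suc i) = (vacant P i - {x. (x,i) \<in> edges P}) \<union> {x. x = i \<and> outE (edges P) i}"
proof (rule set_eqI, rule iffI)
  fix x assume "x \<in> vacant P (Suc i)"
  then obtain y where y: "x < Suc i" "(x,y) \<in> edges P" "y \<ge> Suc i" unfolding vacant_def by blast
  show "x \<in> (vacant P i - {x. (x,i) \<in> edges P}) \<union> {x. x = i \<and> outE (edges P) i}"
  proof (cases "x = i")
    case True then show ?thesis using y unfolding outE_def by blast
  next
    case False
    then have "x < i" using y by simp
    moreover have "(x,i) \<notin> edges P" using valid_out[OF edges_valid[OF P] y(2)] y(3) by force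
    ultimately show ?thesis using y unfolding vacant_def by force
  qed
next
  fix x assume x: "x \<in> (vacant P i - {x. (x,i) \<in> edges P}) \<union> {x. x = i \<and> outE (edges P) i}"
  show "x \<in> vacant P (Suc i)"
  proof (cases "x = i \<and> outE (edges P) i")
    case True
    then obtain y where y: "(i,y) \<in> edges P" unfolding outE_def by blast
    then have "i < y" using valid_rng[OF edges_valid[OF P] y] by simp
    then show ?thesis using True y unfolding vacant_def by auto
  next
    case False
    then have x1: "x \<in> vacant P i" "(x,i) \<notin> edges P" using x by auto
    then obtain y where y: "x < i" "(x,y) \<in> edges P" "y \<ge> i" unfolding vacant_def by blast
    then have "y \<noteq> i" using x1 by blast
    then show ?thesis using y unfolding vacant_def by auto
  qed
qed

lemma card_vac_Suc:
  assumes P: "P \<in> Partitions n"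
  shows "card (vacant P (Suc i)) = card (vacant P i) - (if inE (edges P) i then 1 else 0)
           + (if outE (edges P) i then 1 else 0)"
proof -
  have ni: "i \<notin> vacant P i" unfolding vacant_def by simp
  have A: "card (vacant P i - {x. (x,i) \<in> edges P}) = card (vacant P i) - (if inE (edges P) i then 1 else 0)"
  proof (cases "inE (edges P) i")
    case True
    have "{x. (x,i) \<in> edges P} = {pred_vertex P i}"
      using pred_unique[OF P] pred_edge[OF P True] by blast
    moreover have "pred_vertex P i \<in> vacant P i" using pred_vac[OF P pred_edge[OF P True]] .
    ultimately show ?thesis using True vac_fin by simp
  next
    case False
    then have "{x. (x,i) \<in> edges P} = {}" unfolding inE_def by blast
    then show ?thesis using False by simp
  qed
  show ?thesis
  proof (cases "outE (edges P) i")
    case True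
    then have "vacant P (Suc i) = insert i (vacant P i - {x. (x,i) \<in> edges P})"
      using vac_Suc[OF P] by auto
    then show ?thesis using A ni vac_fin True by simp
  next
    case False
    then have "vacant P (Suc i) = vacant P i - {x. (x,i) \<in> edges P}"
      using vac_Suc[OF P] by auto
    then show ?thesis using A False by simp
  qed
qed

lemma vac_empty:
  assumes P: "P \<in> Partitions n"
  shows "vacant P (Suc n) = {}"
  using valid_rng[OF edges_valid[OF P]] unfolding vacant_def by fastforce



definition Inv :: "setpart \<Rightarrow> nat \<Rightarrow> nat set \<Rightarrow> (nat \<times> nat) set \<Rightarrow> bool" where
  "Inv P m V E \<longleftrightarrow>
   (\<forall>x y. (x,y)\<in>E \<longrightarrow> 1 \<le> x \<and> x < y \<and> y \<le> m) \<and>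
   (\<forall>x y z. (x,y)\<in>E \<longrightarrow> (x,z)\<in>E \<longrightarrow> y = z) \<and>
   (\<forall>x y z. (x,z)\<in>E \<longrightarrow> (y,z)\<in>E \<longrightarrow> x = y) \<and>
   (\<forall>y. inE E y \<longleftrightarrow> y \<le> m \<and> inE (edges P) y) \<and>
   (\<forall>x. outE E x \<longrightarrow> outE (edges P) x) \<and>
   V = {x. x \<le> m \<and> outE (edges P) x \<and> \<not> outE E x} \<and>
   card V = card (vacant P (Suc m))"

lemma Inv_0:
  assumes P: "P \<in> Partitions n"
  shows "Inv P 0 {} {}"
proof -
  have "inE (edges P) 0 \<Longrightarrow> False" using valid_rng[OF edges_valid[OF P]] unfolding inE_def by fastforce
  moreover have "outE (edges P) 0 \<Longrightarrow> False" using valid_rng[OF edges_valid[OF P]] unfolding outE_def by fastforce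
  moreover have "vacant P (Suc 0) = {}" using valid_rng[OF edges_valid[OF P]] unfolding vacant_def by fastforce
  ultimately show ?thesis unfolding Inv_def inE_def outE_def by auto
qed

lemma Inv_step:
  assumes P: "P \<in> Partitions n" and I: "Inv P m V E"
  shows "Inv P (Suc m) (fst (phi_step P (V,E) (Suc m))) (snd (phi_step P (V,E) (Suc m)))"
proof -
  let ?F = "edges P"
  let ?i = "Suc m"
  note I' = I[unfolded Inv_def]
  have Ea: "\<And>x y. (x,y)\<in>E \<Longrightarrow> 1 \<le> x \<and> x < y \<and> y \<le> m" using I' by blast
  have Eb: "\<And>x y z. (x,y)\<in>E \<Longrightarrow> (x,z)\<in>E \<Longrightarrow> y = z" using I' by blast
  have Ec: "\<And>x y z. (x,z)\<in>E \<Longrightarrow> (y,z)\<in>E \<Longrightarrow> x = y" using I' by blast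
  have Ein: "\<And>y. inE E y \<longleftrightarrow> y \<le> m \<and> inE ?F y" using I' by blast
  have Eout: "\<And>x. outE E x \<Longrightarrow> outE ?F x" using I' by blast
  have EV: "V = {x. x \<le> m \<and> outE ?F x \<and> \<not> outE E x}" using I' by blast
  have Ecard: "card V = card (vacant P (Suc m))" using I' by blast
  have "V \<subseteq> {..m}" using EV by auto
  then have finV: "finite V" using finite_subset by blast
  have iV: "?i \<notin> V" using EV by simp
  have iout: "\<not> outE E ?i" using Ea unfolding outE_def by fastforce
  have cv: "card (vacant P (Suc ?i)) = card (vacant P ?i) - (if inE ?F ?i then 1 else 0)
           + (if outE ?F ?i then 1 else 0)" by (rule card_vac_Suc[OF P])
  consider (op) "outE ?F ?i \<and> \<not> inE ?F ?i" | (cl) "inE ?F ?i" | (no) "\<not> outE ?F ?i \<and> \<not> inE ?F ?i" by blast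
  then show ?thesis
  proof cases
    case op
    then have st: "phi_step P (V,E) ?i = (insert ?i V, E)" using step_eq[OF P] by simp
    have "Inv P (Suc m) (insert ?i V) E"
      unfolding Inv_def
    proof (intro conjI allI impI)
      show "\<And>x y. (x,y)\<in>E \<Longrightarrow> 1 \<le> x" "\<And>x y. (x,y)\<in>E \<Longrightarrow> x < y" "\<And>x y. (x,y)\<in>E \<Longrightarrow> y \<le> Suc m"
        using Ea by fastforce+
      show "\<And>x y z. (x,y)\<in>E \<Longrightarrow> (x,z)\<in>E \<Longrightarrow> y = z" by (rule Eb)
      show "\<And>x y z. (x,z)\<in>E \<Longrightarrow> (y,z)\<in>E \<Longrightarrow> x = y" by (rule Ec)
      show "\<And>y. inE E y = (y \<le> Suc m \<and> inE ?F y)" using Ein op by (metis le_Suc_eq)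
      show "\<And>x. outE E x \<Longrightarrow> outE ?F x" by (rule Eout)
      show "insert ?i V = {x. x \<le> Suc m \<and> outE ?F x \<and> \<not> outE E x}"
        using EV op iout by (auto simp: le_Suc_eq)
      show "card (insert ?i V) = card (vacant P (Suc (Suc m)))"
        using cv op Ecard finV iV by simp
    qed
    then show ?thesis using st by simp
  next
    case no
    then have st: "phi_step P (V,E) ?i = (V, E)" using step_eq[OF P] by simp
    have "Inv P (Suc m) V E"
      unfolding Inv_def
    proof (intro conjI allI impI)
      show "\<And>x y. (x,y)\<in>E \<Longrightarrow> 1 \<le> x" "\<And>x y. (x,y)\<in>E \<Longrightarrow> x < y" "\<And>x y. (x,y)\<in>E \<Longrightarrow> y \<le> Suc m"
        using Ea by fastforce+
      show "\<And>x y z. (x,y)\<in>E \<Longrightarrow> (x,z)\<in>E \<Longrightarrow> y = z" by (rule Eb)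
      show "\<And>x y z. (x,z)\<in>E \<Longrightarrow> (y,z)\<in>E \<Longrightarrow> x = y" by (rule Ec)
      show "\<And>y. inE E y = (y \<le> Suc m \<and> inE ?F y)" using Ein no by (metis le_Suc_eq)
      show "\<And>x. outE E x \<Longrightarrow> outE ?F x" by (rule Eout)
      show "V = {x. x \<le> Suc m \<and> outE ?F x \<and> \<not> outE E x}"
        using EV no by (auto simp: le_Suc_eq)
      show "card V = card (vacant P (Suc (Suc m)))"
        using cv no Ecard by simp
    qed
    then show ?thesis using st by simp
  next
    case cl
    define x where "x = kth_largest V (gamma P ?i)"
    define V' where "V' = (V - {x}) \<union> (if outE ?F ?i then {?i} else {})"
    have st: "phi_step P (V,E) ?i = (V', insert (x,?i) E)"
      using step_eq[OF P] cl unfolding x_def V'_def by simp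
    have g: "1 \<le> gamma P ?i" "gamma P ?i \<le> card V" using gamma_bounds[OF P cl] Ecard by auto
    have xV: "x \<in> V" using kth_facts[OF finV g] unfolding x_def by blast
    have x1: "x \<le> m" "outE ?F x" "\<not> outE E x" using xV EV by auto
    have x0: "1 \<le> x"
    proof -
      obtain y where "(x,y) \<in> ?F" using x1(2) unfolding outE_def by blast
      then show ?thesis using valid_rng[OF edges_valid[OF P]] by blast
    qed
    have niE: "\<not> inE E ?i" using Ein by simp
    have "Inv P (Suc m) V' (insert (x,?i) E)"
      unfolding Inv_def
    proof (intro conjI allI impI)
      show "\<And>a b. (a,b)\<in>insert (x,?i) E \<Longrightarrow> 1 \<le> a" "\<And>a b. (a,b)\<in>insert (x,?i) E \<Longrightarrow> a < b"
        "\<And>a b. (a,b)\<in>insert (x,?i) E \<Longrightarrow> b \<le> Suc m"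
        using Ea x0 x1 by fastforce+
      show "\<And>a b c. (a,b)\<in>insert (x,?i) E \<Longrightarrow> (a,c)\<in>insert (x,?i) E \<Longrightarrow> b = c"
        using Eb x1(3) unfolding outE_def by blast
      show "\<And>a b c. (a,c)\<in>insert (x,?i) E \<Longrightarrow> (b,c)\<in>insert (x,?i) E \<Longrightarrow> a = b"
        using Ec niE unfolding inE_def by blast
      show "\<And>y. inE (insert (x,?i) E) y = (y \<le> Suc m \<and> inE ?F y)"
      proof -
        fix y
        have "inE (insert (x,?i) E) y \<longleftrightarrow> y = ?i \<or> inE E y" unfolding inE_def by auto
        then show "inE (insert (x,?i) E) y = (y \<le> Suc m \<and> inE ?F y)" using Ein cl by (metis le_Suc_eq)
      qed
      show "\<And>a. outE (insert (x,?i) E) a \<Longrightarrow> outE ?F a"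
      proof -
        fix a assume "outE (insert (x,?i) E) a"
        then have "a = x \<or> outE E a" unfolding outE_def by auto
        then show "outE ?F a" using Eout x1 by blast
      qed
      have oi: "outE (insert (x,?i) E) a \<longleftrightarrow> a = x \<or> outE E a" for a unfolding outE_def by auto
      show "V' = {a. a \<le> Suc m \<and> outE ?F a \<and> \<not> outE (insert (x,?i) E) a}"
      proof (rule set_eqI)
        fix a
        show "a \<in> V' \<longleftrightarrow> a \<in> {a. a \<le> Suc m \<and> outE ?F a \<and> \<not> outE (insert (x,?i) E) a}"
        proof (cases "a = ?i")
          case True
          then show ?thesis unfolding V'_def oi using iV xV iout by auto
        next
          case False
          then show ?thesis unfolding V'_def oi using EV by (auto simp: le_Suc_eq)
        qed
      qed
      have cV: "card (V - {x}) = card V - 1" using xV finV by simp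
      have iV': "?i \<notin> V - {x}" using iV by simp
      show "card V' = card (vacant P (Suc (Suc m)))"
        unfolding V'_def using cv cl Ecard cV iV' finV by auto
    qed
    then show ?thesis using st by simp
  qed
qed

lemma Inv_state:
  assumes P: "P \<in> Partitions n"
  shows "Inv P m (fst (phi_state P m)) (snd (phi_state P m))"
proof (induction m)
  case 0 then show ?case using Inv_0[OF P] state_0 by simp
next
  case (Suc m)
  obtain V E where ve: "phi_state P m = (V,E)" by (cases "phi_state P m")
  show ?case using Inv_step[OF P Suc[unfolded ve fst_conv snd_conv]] state_Suc ve by simp
qed



lemma restr:
  assumes P: "P \<in> Partitions n" and mk: "m \<le> k"
  shows "{(x,y) \<in> snd (phi_state P k). y \<le> m} = snd (phi_state P m)"
  using mk
proof (induction k rule: dec_induct)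
  case base
  have "\<forall>x y. (x,y) \<in> snd (phi_state P m) \<longrightarrow> y \<le> m" using Inv_state[OF P, of m] unfolding Inv_def by blast
  then show ?case by auto
next
  case (step k)
  have "snd (phi_state P (Suc k)) = snd (phi_state P k) \<or>
        (\<exists>x. snd (phi_state P (Suc k)) = insert (x, Suc k) (snd (phi_state P k)))"
    unfolding state_Suc by (rule step_snd)
  then show ?case using step by auto
qed

lemma V_vacant:
  assumes v: "valid n G"
  shows "{x. x \<le> m \<and> outE G x \<and> \<not> outE {(a,b)\<in>G. b \<le> m} x} = {x. x < Suc m \<and> (\<exists>y. (x,y)\<in>G \<and> y \<ge> Suc m)}"
proof (rule set_eqI, rule iffI)
  fix x assume "x \<in> {x. x \<le> m \<and> outE G x \<and> \<not> outE {(a,b)\<in>G. b \<le> m} x}"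
  then show "x \<in> {x. x < Suc m \<and> (\<exists>y. (x,y)\<in>G \<and> y \<ge> Suc m)}" unfolding outE_def by force
next
  fix x assume x: "x \<in> {x. x < Suc m \<and> (\<exists>y. (x,y)\<in>G \<and> y \<ge> Suc m)}"
  then obtain y where y: "x \<le> m" "(x,y) \<in> G" "y \<ge> Suc m" by auto
  have "\<not> outE {(a,b)\<in>G. b \<le> m} x"
  proof
    assume "outE {(a,b)\<in>G. b \<le> m} x"
    then obtain z where "(x,z) \<in> G" "z \<le> m" unfolding outE_def by blast
    then show False using valid_out[OF v y(2)] y(3) by fastforce
  qed
  then show "x \<in> {x. x \<le> m \<and> outE G x \<and> \<not> outE {(a,b)\<in>G. b \<le> m} x}" using y unfolding outE_def by blast
qed

lemma final:
  assumes P: "P \<in> Partitions n"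
  shows "valid n (snd (phi_state P n)) \<and> outE (snd (phi_state P n)) = outE (edges P)
         \<and> inE (snd (phi_state P n)) = inE (edges P)"
proof -
  let ?E = "snd (phi_state P n)"
  let ?V = "fst (phi_state P n)"
  have I: "Inv P n ?V ?E" by (rule Inv_state[OF P])
  note I' = I[unfolded Inv_def]
  have Ea: "\<forall>x y. (x,y)\<in>?E \<longrightarrow> 1 \<le> x \<and> x < y \<and> y \<le> n" using I' by (elim conjE)
  have Eb: "\<forall>x y z. (x,y)\<in>?E \<longrightarrow> (x,z)\<in>?E \<longrightarrow> y = z" using I' by (elim conjE)
  have Ec: "\<forall>x y z. (x,z)\<in>?E \<longrightarrow> (y,z)\<in>?E \<longrightarrow> x = y" using I' by (elim conjE)
  have Ein: "\<forall>y. inE ?E y \<longleftrightarrow> y \<le> n \<and> inE (edges P) y" using I' by (elim conjE)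
  have Eout: "\<forall>x. outE ?E x \<longrightarrow> outE (edges P) x" using I' by (elim conjE)
  have EV: "?V = {x. x \<le> n \<and> outE (edges P) x \<and> \<not> outE ?E x}" using I' by (elim conjE)
  have Ecard: "card ?V = card (vacant P (Suc n))" using I' by (elim conjE)
  have va: "valid n ?E" unfolding valid_def using Ea Eb Ec by blast
  have "?V \<subseteq> {..n}" using EV by auto
  then have fin: "finite ?V" using finite_subset by blast
  have "card ?V = 0" using Ecard vac_empty[OF P] by simp
  then have V0: "?V = {}" using fin by simp
  have ie: "inE ?E = inE (edges P)"
  proof
    fix y
    have "inE (edges P) y \<Longrightarrow> y \<le> n" using valid_rng[OF edges_valid[OF P]] unfolding inE_def by blast
    then show "inE ?E y = inE (edges P) y" using Ein by blast
  qed
  have oe: "outE ?E = outE (edges P)"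
  proof
    fix x
    have "outE (edges P) x \<Longrightarrow> x \<le> n" using valid_rng[OF edges_valid[OF P]] unfolding outE_def by fastforce
    moreover have "x \<notin> ?V" using V0 by simp
    ultimately show "outE ?E x = outE (edges P) x" using Eout EV by blast
  qed
  show ?thesis using va ie oe by simp
qed



lemma Inv_V: "Inv P m V E \<Longrightarrow> V = {x. x \<le> m \<and> outE (edges P) x \<and> \<not> outE E x}"
  unfolding Inv_def by (elim conjE)
lemma Inv_card: "Inv P m V E \<Longrightarrow> card V = card (vacant P (Suc m))"
  unfolding Inv_def by (elim conjE)

theorem lemma2p1:
  fixes n :: nat and P :: "nat set set"
  assumes "n \<ge> 1" and "P \<in> Partitions n"
  shows "(\<forall>i \<in> closers P \<union> transients P.
            gamma P i \<le> card (fst (phi_state P (i - 1))))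
         \<and> (\<exists>Q \<in> Partitions n. edges Q = snd (phi_state P n))
         \<and> phi n P \<in> Partitions n
         \<and> edges (phi n P) = snd (phi_state P n)
         \<and> phi n (phi n P) = P
         \<and> ptype (phi n P) = ptype P"
proof -
  have P: "P \<in> Partitions n" by (rule assms(2))
  define F where "F = edges P"
  define E' where "E' = snd (phi_state P n)"
  define Q where "Q = components_partition n E'"
  have fin: "valid n E'" "outE E' = outE F" "inE E' = inE F"
    using final[OF P] unfolding E'_def F_def by auto
  have Q: "Q \<in> Partitions n" unfolding Q_def by (rule comp_part[OF fin(1)])
  have eQ: "edges Q = E'" unfolding Q_def by (rule comp_edges[OF fin(1)])
  have phiP: "phi n P = Q" unfolding phi_def Q_def E'_def by simp
  have oQ: "outE (edges Q) = outE F" using eQ fin by simp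
  have iQ: "inE (edges Q) = inE F" using eQ fin by simp
  have c1: "\<forall>i \<in> closers P \<union> transients P. gamma P i \<le> card (fst (phi_state P (i - 1)))"
  proof
    fix i assume "i \<in> closers P \<union> transients P"
    then have ii: "inE F i" using closers_char[OF P] transients_char[OF P] unfolding F_def by auto
    then obtain j where "(j,i) \<in> F" unfolding inE_def by blast
    then have "1 \<le> i" using valid_rng[OF edges_valid[OF P]] unfolding F_def by fastforce
    then have si: "Suc (i - 1) = i" by simp
    have "card (fst (phi_state P (i - 1))) = card (vacant P i)"
      using Inv_card[OF Inv_state[OF P, of "i - 1"]] si by simp
    then show "gamma P i \<le> card (fst (phi_state P (i - 1)))"
      using gamma_bounds[OF P ii[unfolded F_def]] by simp
  qed
  have ty: "ptype Q = ptype P"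
    unfolding ptype_def openers_char[OF P] closers_char[OF P] transients_char[OF P] singletons_char[OF P]
      openers_char[OF Q] closers_char[OF Q] transients_char[OF Q] singletons_char[OF Q]
    using oQ iQ unfolding F_def by simp
  have key: "m \<le> n \<Longrightarrow> snd (phi_state Q m) = {(x,y) \<in> F. y \<le> m}" for m
  proof (induction m)
    case 0
    have "{(x,y) \<in> F. y \<le> 0} = {}" using valid_rng[OF edges_valid[OF P]] unfolding F_def by fastforce
    then show ?case using state_0 by simp
  next
    case (Suc m)
    let ?i = "Suc m"
    have IH: "snd (phi_state Q m) = {(x,y) \<in> F. y \<le> m}" using Suc by simp
    obtain V2 E2 where s2: "phi_state Q m = (V2,E2)" by (cases "phi_state Q m")
    have E2: "E2 = {(x,y) \<in> F. y \<le> m}" using IH s2 by simp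
    have st2: "phi_state Q ?i = phi_step Q (V2,E2) ?i" using state_Suc s2 by simp
    show ?case
    proof (cases "inE F ?i")
      case False
      have "snd (phi_state Q ?i) = E2" using st2 step_eq[OF Q] False iQ by simp
      moreover have "{(x,y) \<in> F. y \<le> Suc m} = {(x,y) \<in> F. y \<le> m}"
        using False unfolding inE_def by (auto simp: le_Suc_eq)
      ultimately show ?thesis using E2 by simp
    next
      case True
      have vF: "valid n F" unfolding F_def by (rule edges_valid[OF P])
      have vQ: "vacant Q ?i = {x. x < ?i \<and> (\<exists>y. (x,y) \<in> E' \<and> y \<ge> ?i)}" unfolding vacant_def eQ by simp
      have vP: "vacant P ?i = {x. x < ?i \<and> (\<exists>y. (x,y) \<in> F \<and> y \<ge> ?i)}" unfolding vacant_def F_def by simp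
      have V2: "V2 = vacant P ?i"
      proof -
        have "V2 = {x. x \<le> m \<and> outE (edges Q) x \<and> \<not> outE E2 x}"
          using Inv_V[OF Inv_state[OF Q, of m]] s2 by simp
        also have "\<dots> = {x. x \<le> m \<and> outE F x \<and> \<not> outE {(a,b)\<in>F. b \<le> m} x}" using oQ E2 by simp
        also have "\<dots> = vacant P ?i" unfolding vP by (rule V_vacant[OF vF])
        finally show ?thesis .
      qed
      obtain V1 E1 where s1: "phi_state P m = (V1,E1)" by (cases "phi_state P m")
      have I1: "Inv P m V1 E1" using Inv_state[OF P, of m] s1 by simp
      have E1: "E1 = {(a,b)\<in>E'. b \<le> m}" using restr[OF P, of m n] Suc.prems s1 unfolding E'_def by simp
      have V1: "V1 = vacant Q ?i"
      proof -
        have "V1 = {x. x \<le> m \<and> outE (edges P) x \<and> \<not> outE E1 x}" using Inv_V[OF I1] .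
        also have "\<dots> = {x. x \<le> m \<and> outE E' x \<and> \<not> outE {(a,b)\<in>E'. b \<le> m} x}" using fin E1 unfolding F_def by simp
        also have "\<dots> = vacant Q ?i" unfolding vQ by (rule V_vacant[OF fin(1)])
        finally show ?thesis .
      qed
      have cV1: "card V1 = card (vacant P ?i)" using Inv_card[OF I1] .
      have gP: "1 \<le> gamma P ?i" "gamma P ?i \<le> card V1" using gamma_bounds[OF P True[unfolded F_def]] cV1 by auto
      define x1 where "x1 = kth_largest V1 (gamma P ?i)"
      have st1: "snd (phi_state P ?i) = insert (x1, ?i) E1"
        using state_Suc[of P m] s1 step_eq[OF P] True unfolding x1_def F_def by simp
      have "snd (phi_state P ?i) = {(a,b)\<in>E'. b \<le> ?i}" using restr[OF P, of ?i n] Suc.prems unfolding E'_def by simp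
      then have "(x1, ?i) \<in> E'" using st1 by blast
      then have pQ: "pred_vertex Q ?i = x1" using pred_unique[OF Q] eQ by simp
      have finV1: "finite V1" using V1 vac_fin by simp
      have g1: "gamma Q ?i = card {v \<in> V1. v \<le> x1}" using pQ V1 by (simp add: gamma_def)
      have gQ: "gamma Q ?i = card (vacant P ?i) + 1 - gamma P ?i"
        using g1 kth_facts[OF finV1 gP] cV1 unfolding x1_def by simp
      have pP: "pred_vertex P ?i \<in> vacant P ?i" using pred_vac[OF P pred_edge[OF P True[unfolded F_def]]] .
      have gPd: "gamma P ?i = card {v \<in> vacant P ?i. v \<le> pred_vertex P ?i}" by (rule gamma_def)
      have fv: "finite (vacant P ?i)" by (rule vac_fin)
      have kk: "kth_largest (vacant P ?i) (card (vacant P ?i) + 1 - card {v \<in> vacant P ?i. v \<le> pred_vertex P ?i}) = pred_vertex P ?i"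
        using fv pP by (rule kth_inv)
      have e1: "gamma Q ?i = card (vacant P ?i) + 1 - card {v \<in> vacant P ?i. v \<le> pred_vertex P ?i}"
        using gQ unfolding gPd .
      have x2: "kth_largest V2 (gamma Q ?i) = pred_vertex P ?i"
        unfolding e1 V2 by (rule kk)
      have "snd (phi_state Q ?i) = insert (kth_largest V2 (gamma Q ?i), ?i) E2"
        using st2 step_eq[OF Q] True iQ by simp
      also have "\<dots> = insert (pred_vertex P ?i, ?i) {(x,y) \<in> F. y \<le> m}" using x2 E2 by simp
      also have "\<dots> = {(x,y) \<in> F. y \<le> ?i}"
      proof -
        have pe: "(pred_vertex P ?i, ?i) \<in> F" using pred_edge[OF P True[unfolded F_def]] unfolding F_def .
        have uq: "\<And>a. (a, ?i) \<in> F \<Longrightarrow> a = pred_vertex P ?i" using pred_unique[OF P] unfolding F_def by metis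
        show ?thesis
        proof (rule set_eqI)
          fix z :: "nat \<times> nat"
          obtain a b where z: "z = (a,b)" by (cases z)
          have "(a,b) \<in> insert (pred_vertex P ?i, ?i) {(x,y) \<in> F. y \<le> m} \<longleftrightarrow> (a,b) \<in> {(x,y) \<in> F. y \<le> ?i}"
          proof (cases "b = ?i")
            case True
            have l: "(a,b) \<in> insert (pred_vertex P ?i, ?i) {(x,y) \<in> F. y \<le> m} \<longleftrightarrow> a = pred_vertex P ?i"
              using True by simp
            have r: "(a,b) \<in> {(x,y) \<in> F. y \<le> ?i} \<longleftrightarrow> a = pred_vertex P ?i"
            proof
              assume "(a,b) \<in> {(x,y) \<in> F. y \<le> ?i}"
              then have "(a, ?i) \<in> F" using True by simp
              then show "a = pred_vertex P ?i" by (rule uq)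
            next
              assume "a = pred_vertex P ?i"
              then show "(a,b) \<in> {(x,y) \<in> F. y \<le> ?i}" using pe True by simp
            qed
            show ?thesis using l r by simp
          next
            case False
            then have "b \<le> ?i \<longleftrightarrow> b \<le> m" by linarith
            then show ?thesis using False by simp
          qed
          then show "z \<in> insert (pred_vertex P ?i, ?i) {(x,y) \<in> F. y \<le> m} \<longleftrightarrow> z \<in> {(x,y) \<in> F. y \<le> ?i}"
            using z by simp
        qed
      qed
      finally show ?thesis .
    qed
  qed
  have "snd (phi_state Q n) = F"
  proof -
    have "{(x,y) \<in> F. y \<le> n} = F" using valid_rng[OF edges_valid[OF P]] unfolding F_def by fastforce
    then show ?thesis using key[of n] by simp
  qed
  then have inv: "phi n Q = P" unfolding phi_def using comp_of_edges[OF P] unfolding F_def by simp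
  have r2: "\<exists>Q \<in> Partitions n. edges Q = snd (phi_state P n)" using Q eQ unfolding E'_def by blast
  have r3: "phi n P \<in> Partitions n" using phiP Q by simp
  have r4: "edges (phi n P) = snd (phi_state P n)" using phiP eQ unfolding E'_def by simp
  have r5: "phi n (phi n P) = P" using phiP inv by simp
  have r6: "ptype (phi n P) = ptype P" using phiP ty by simp
  show ?thesis using c1 r2 r3 r4 r5 r6 by (intro conjI)
qed

end
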